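(* Let $X$ be a precubical set and $\alpha$ a dipath on $\vec{|X|}$. Then there is a dipath $\beta$ on $\vec{|X|}$ from $\mathrm{supp}(\alpha(0))_*(0,\ldots,0)$ to $\mathrm{supp}(\alpha(1))_*(0,\ldots,0)$ such that $U(\beta):[0,1]\to|X|$ is cellular and $U(\alpha)$ is homotopic to $U(\beta)$. Moreover, if $\alpha$ is non-constant and $\alpha(0)=\alpha(1)$, then $\beta$ can be taken to be non-constant.
   Context: Streams: a circulation on a space $X$ assigns to each open $V\subset X$ a preorder $\leqslant_V$ such that for every collection $\mathcal{O}$ of open sets, $\leqslant_{\bigcup\mathcal{O}}$ is the preorder with smallest graph containing $\bigcup_{V\in\mathcal{O}}\mathrm{graph}(\leqslant_V)$; a stream is a space with a circulation; a stream map $f:X\to Y$ is continuous with $f(x)\leqslant_V f(y)$ whenever $x\leqslant_{f^{-1}V}y$; $U$ is the forgetful functor to spaces. $\vec\square[1]$ is $[0,1]$ with circulation $x\leqslant_V y$ iff $x\le y$ and $[x,y]\subset V$; a dipath on a stream is a stream map from $\vec\square[1]$. Precubical sets: $\square$ is the smallest subcategory of posets and monotone maps closed under cartesian products (unit $[0]$) containing $\delta_\pm:[0]\to[1]=\{0<1\}$; objects $[1]^n$. A precubical set is a functor $X:\square^{op}\to\mathbf{Set}$, $X_n=X([1]^n)$; $\square[n]=\square(-,[1]^n)$, and $\sigma\in X_n$ corresponds by Yoneda to $\sigma_*:\square[n]\to X$. The geometric realization $|X|=\int^{[1]^n}X_n\cdot\mathbb{I}^n$ (with $\square$-morphisms extended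 linearly) is a CW complex whose $n$-cells have characteristic maps $|\sigma_*|:\mathbb{I}^n=|\square[n]|\to|X|$, $\sigma\in X_n$. Each $x\in|X|$ lies in the interior of a unique closed cell; $\mathrm{supp}(x)\in X_d$ is the corresponding cube, and $\mathrm{supp}(x)_*(0,\ldots,0)$ denotes the vertex $|\mathrm{supp}(x)_*|(0,\ldots,0)\in|X|$. $\vec\square[n]$ is the $n$-fold product of $\vec\square[1]$ in streams; the stream realization is the coend $\vec{|X|}=\int^{[1]^n}X_n\cdot\vec\square[n]$ in streams, with underlying space $|X|$. $[0,1]$ carries the CW structure with vertices $0,1$. *)

theory Defs
  imports "HOL-Analysis.Analysis"
begin

text \<open>Points of the standard n-cube I^n are represented as functions nat to real
  that vanish outside the first n coordinates; topology = subspace of the product topology.\<close>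

definition cube :: "nat \<Rightarrow> (nat \<Rightarrow> real) set" where
  "cube n = {t. (\<forall>i<n. 0 \<le> t i \<and> t i \<le> 1) \<and> (\<forall>i\<ge>n. t i = 0)}"

definition ocube :: "nat \<Rightarrow> (nat \<Rightarrow> real) set" where
  "ocube n = {t. (\<forall>i<n. 0 < t i \<and> t i < 1) \<and> (\<forall>i\<ge>n. t i = 0)}"

definition coface :: "nat \<Rightarrow> bool \<Rightarrow> (nat \<Rightarrow> real) \<Rightarrow> (nat \<Rightarrow> real)" where
  "coface i e t = (\<lambda>k. if k < i then t k else if k = i then (if e then 1 else 0) else t (k - 1))"

text \<open>A precubical set is given by its sets of n-cubes X n and face maps
  d n i e : X n -> X (n-1) (i < n), i.e. the action of the coface morphisms of the
  cube category, subject to the precubical identities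
  d_i^e d_j^e' = d_(j-1)^e' d_i^e for i < j.\<close>

definition precubical :: "(nat \<Rightarrow> 'a set) \<Rightarrow> (nat \<Rightarrow> nat \<Rightarrow> bool \<Rightarrow> 'a \<Rightarrow> 'a) \<Rightarrow> bool" where
  "precubical X d \<longleftrightarrow>
     (\<forall>n i e x. x \<in> X (Suc n) \<and> i \<le> n \<longrightarrow> d (Suc n) i e x \<in> X n) \<and>
     (\<forall>n i j e e' x. x \<in> X (Suc (Suc n)) \<and> i < j \<and> j \<le> Suc n \<longrightarrow>
        d (Suc n) i e (d (Suc (Suc n)) j e' x) = d (Suc n) (j - 1) e' (d (Suc (Suc n)) i e x))"

type_synonym 'a rpoint = "(nat \<times> 'a \<times> (nat \<Rightarrow> real)) set"

definition rgen :: "(nat \<Rightarrow> 'a set) \<Rightarrow> (nat \<Rightarrow> nat \<Rightarrow> bool \<Rightarrow> 'a \<Rightarrow> 'a)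
    \<Rightarrow> ((nat \<times> 'a \<times> (nat \<Rightarrow> real)) \<times> (nat \<times> 'a \<times> (nat \<Rightarrow> real))) set" where
  "rgen X d = {((n, d (Suc n) i e x, t), (Suc n, x, coface i e t)) | n i e x t.
                 x \<in> X (Suc n) \<and> i \<le> n \<and> t \<in> cube n}"

text \<open>the equivalence relation of the coend\<close>
definition rrel where
  "rrel X d = (rgen X d \<union> (rgen X d)\<inverse>)\<^sup>*"

text \<open>characteristic map |sigma_*| : I^n -> |X| of the cell sigma in X n\<close>
definition chr :: "(nat \<Rightarrow> 'a set) \<Rightarrow> (nat \<Rightarrow> nat \<Rightarrow> bool \<Rightarrow> 'a \<Rightarrow> 'a)
    \<Rightarrow> nat \<Rightarrow> 'a \<Rightarrow> (nat \<Rightarrow> real) \<Rightarrow> 'a rpoint" where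
  "chr X d n x t = rrel X d `` {(n, x, t)}"

definition realization :: "(nat \<Rightarrow> 'a set) \<Rightarrow> (nat \<Rightarrow> nat \<Rightarrow> bool \<Rightarrow> 'a \<Rightarrow> 'a) \<Rightarrow> 'a rpoint set" where
  "realization X d = {chr X d n x t | n x t. x \<in> X n \<and> t \<in> cube n}"

definition realization_top :: "(nat \<Rightarrow> 'a set) \<Rightarrow> (nat \<Rightarrow> nat \<Rightarrow> bool \<Rightarrow> 'a \<Rightarrow> 'a) \<Rightarrow> 'a rpoint topology" where
  "realization_top X d = topology (\<lambda>U. U \<subseteq> realization X d \<and>
      (\<forall>n x. x \<in> X n \<longrightarrow> openin (top_of_set (cube n)) {t \<in> cube n. chr X d n x t \<in> U}))"

definition supp :: "(nat \<Rightarrow> 'a set) \<Rightarrow> (nat \<Rightarrow> nat \<Rightarrow> bool \<Rightarrow> 'a \<Rightarrow> 'a) \<Rightarrow> 'a rpoint \<Rightarrow> nat \<times> 'a" where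
  "supp X d p = (THE (n, x). x \<in> X n \<and> (\<exists>t\<in>ocube n. chr X d n x t = p))"

definition supp_vertex :: "(nat \<Rightarrow> 'a set) \<Rightarrow> (nat \<Rightarrow> nat \<Rightarrow> bool \<Rightarrow> 'a \<Rightarrow> 'a) \<Rightarrow> 'a rpoint \<Rightarrow> 'a rpoint" where
  "supp_vertex X d p = (case supp X d p of (n, x) \<Rightarrow> chr X d n x (\<lambda>_. 0))"

definition skeleton :: "(nat \<Rightarrow> 'a set) \<Rightarrow> (nat \<Rightarrow> nat \<Rightarrow> bool \<Rightarrow> 'a \<Rightarrow> 'a) \<Rightarrow> nat \<Rightarrow> 'a rpoint set" where
  "skeleton X d k = {chr X d n x t | n x t. n \<le> k \<and> x \<in> X n \<and> t \<in> cube n}"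

text \<open>cellular map [0,1] -> |X|, [0,1] with vertices 0, 1 and one 1-cell\<close>
definition cellular_path :: "(nat \<Rightarrow> 'a set) \<Rightarrow> (nat \<Rightarrow> nat \<Rightarrow> bool \<Rightarrow> 'a \<Rightarrow> 'a) \<Rightarrow> (real \<Rightarrow> 'a rpoint) \<Rightarrow> bool" where
  "cellular_path X d f \<longleftrightarrow> f ` {0, 1} \<subseteq> skeleton X d 0 \<and> f ` {0..1} \<subseteq> skeleton X d 1"

text \<open>A circulation is represented as c V x y, meaning x \<le>_V y.\<close>

definition stream_map :: "'a topology \<Rightarrow> ('a set \<Rightarrow> 'a \<Rightarrow> 'a \<Rightarrow> bool)
    \<Rightarrow> 'b topology \<Rightarrow> ('b set \<Rightarrow> 'b \<Rightarrow> 'b \<Rightarrow> bool) \<Rightarrow> ('a \<Rightarrow> 'b) \<Rightarrow> bool" where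
  "stream_map T1 c1 T2 c2 f \<longleftrightarrow> continuous_map T1 T2 f \<and>
     (\<forall>V x y. openin T2 V \<longrightarrow> c1 (f -` V \<inter> topspace T1) x y \<longrightarrow> c2 V (f x) (f y))"

definition circ1 :: "real set \<Rightarrow> real \<Rightarrow> real \<Rightarrow> bool" where
  "circ1 V x y \<longleftrightarrow> x \<le> y \<and> {x..y} \<subseteq> V"

text \<open>circulation of the directed n-cube (product stream of n copies of the directed interval):
  the circulation of the compact pospace I^n with the product order, i.e. x \<le>_V y iff there is a
  chain x = x0 \<le> ... \<le> xk = y whose consecutive order intervals lie in V\<close>
definition cubecirc :: "nat \<Rightarrow> (nat \<Rightarrow> real) set \<Rightarrow> (nat \<Rightarrow> real) \<Rightarrow> (nat \<Rightarrow> real) \<Rightarrow> bool" where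
  "cubecirc n V = tranclp (\<lambda>a b. a \<in> cube n \<and> b \<in> cube n \<and> a \<le> b \<and>
                                 {c \<in> cube n. a \<le> c \<and> c \<le> b} \<subseteq> V)"

text \<open>circulation of the stream realization: the colimit (final) circulation, i.e. the
  smallest circulation making all characteristic maps stream maps\<close>
definition rcirc :: "(nat \<Rightarrow> 'a set) \<Rightarrow> (nat \<Rightarrow> nat \<Rightarrow> bool \<Rightarrow> 'a \<Rightarrow> 'a)
    \<Rightarrow> 'a rpoint set \<Rightarrow> 'a rpoint \<Rightarrow> 'a rpoint \<Rightarrow> bool" where
  "rcirc X d V p q \<longleftrightarrow> (p = q \<and> p \<in> V) \<or>
     tranclp (\<lambda>p q. \<exists>n x s t. x \<in> X n \<and>
                 cubecirc n {u \<in> cube n. chr X d n x u \<in> V} s t \<and>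
                 p = chr X d n x s \<and> q = chr X d n x t) p q"

definition dipath :: "(nat \<Rightarrow> 'a set) \<Rightarrow> (nat \<Rightarrow> nat \<Rightarrow> bool \<Rightarrow> 'a \<Rightarrow> 'a) \<Rightarrow> (real \<Rightarrow> 'a rpoint) \<Rightarrow> bool" where
  "dipath X d f \<longleftrightarrow> stream_map (top_of_set {0..1}) circ1 (realization_top X d) (rcirc X d) f"

end

theory Submission
  imports Defs
begin


definition ropen where "ropen X d U \<longleftrightarrow> U \<subseteq> realization X d \<and>
      (\<forall>n x. x \<in> X n \<longrightarrow> openin (top_of_set (cube n)) {t \<in> cube n. chr X d n x t \<in> U})"

lemma ropen_Int: "ropen X d S \<Longrightarrow> ropen X d T \<Longrightarrow> ropen X d (S \<inter> T)"
  unfolding ropen_def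
proof (intro conjI allI impI)
  fix n x assume S: "S \<subseteq> realization X d \<and> (\<forall>n x. x \<in> X n \<longrightarrow> openin (top_of_set (cube n)) {t \<in> cube n. chr X d n x t \<in> S})"
    and T: "T \<subseteq> realization X d \<and> (\<forall>n x. x \<in> X n \<longrightarrow> openin (top_of_set (cube n)) {t \<in> cube n. chr X d n x t \<in> T})"
    and "x \<in> X n"
  then have "openin (top_of_set (cube n)) ({t \<in> cube n. chr X d n x t \<in> S} \<inter> {t \<in> cube n. chr X d n x t \<in> T})"
    by (intro openin_Int) auto
  moreover have "{t \<in> cube n. chr X d n x t \<in> S \<inter> T} = {t \<in> cube n. chr X d n x t \<in> S} \<inter> {t \<in> cube n. chr X d n x t \<in> T}" by auto
  ultimately show "openin (top_of_set (cube n)) {t \<in> cube n. chr X d n x t \<in> S \<inter> T}" by simp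
qed auto

lemma ropen_Union: "(\<And>S. S \<in> K \<Longrightarrow> ropen X d S) \<Longrightarrow> ropen X d (\<Union>K)"
  unfolding ropen_def
proof (intro conjI allI impI)
  fix n x assume K: "\<And>S. S \<in> K \<Longrightarrow> S \<subseteq> realization X d \<and> (\<forall>n x. x \<in> X n \<longrightarrow> openin (top_of_set (cube n)) {t \<in> cube n. chr X d n x t \<in> S})"
    and "x \<in> X n"
  then have "openin (top_of_set (cube n)) (\<Union>S\<in>K. {t \<in> cube n. chr X d n x t \<in> S})"
    by (intro openin_Union) auto
  moreover have "{t \<in> cube n. chr X d n x t \<in> \<Union>K} = (\<Union>S\<in>K. {t \<in> cube n. chr X d n x t \<in> S})" by auto
  ultimately show "openin (top_of_set (cube n)) {t \<in> cube n. chr X d n x t \<in> \<Union>K}" by simp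
next
  assume "\<And>S. S \<in> K \<Longrightarrow> S \<subseteq> realization X d \<and> (\<forall>n x. x \<in> X n \<longrightarrow> openin (top_of_set (cube n)) {t \<in> cube n. chr X d n x t \<in> S})"
  then show "\<Union>K \<subseteq> realization X d" by blast
qed

lemma istop_rt: "istopology (ropen X d)"
  unfolding istopology_def using ropen_Int ropen_Union by blast

lemma openin_rt: "openin (realization_top X d) U \<longleftrightarrow> U \<subseteq> realization X d \<and>
      (\<forall>n x. x \<in> X n \<longrightarrow> openin (top_of_set (cube n)) {t \<in> cube n. chr X d n x t \<in> U})"
proof -
  have e: "realization_top X d = topology (ropen X d)"
    unfolding realization_top_def ropen_def[abs_def] by (rule refl)
  show ?thesis unfolding e topology_inverse'[OF istop_rt] ropen_def by (rule refl)
qed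

lemma chr_in_real: "x \<in> X n \<Longrightarrow> t \<in> cube n \<Longrightarrow> chr X d n x t \<in> realization X d"
  unfolding realization_def by blast

lemma topspace_rt: "topspace (realization_top X d) = realization X d"
proof -
  have "openin (realization_top X d) (realization X d)"
    unfolding openin_rt
  proof (intro conjI allI impI)
    fix n x assume "x \<in> X n"
    then have "{t \<in> cube n. chr X d n x t \<in> realization X d} = cube n" by (auto intro: chr_in_real)
    moreover have "openin (top_of_set (cube n)) (cube n)" by (metis openin_topspace topspace_euclidean_subtopology)
    ultimately show "openin (top_of_set (cube n)) {t \<in> cube n. chr X d n x t \<in> realization X d}" by simp
  qed simp
  then have a: "realization X d \<subseteq> topspace (realization_top X d)" by (rule openin_subset)
  have "openin (realization_top X d) (topspace (realization_top X d))" by (rule openin_topspace)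
  then have "topspace (realization_top X d) \<subseteq> realization X d" unfolding openin_rt by (rule conjunct1)
  then show ?thesis using a by (rule subset_antisym)
qed

lemma chr_cont: "x \<in> X n \<Longrightarrow> continuous_map (top_of_set (cube n)) (realization_top X d) (chr X d n x)"
  unfolding continuous_map_def topspace_rt
  by (auto simp: chr_in_real openin_rt)



definition bnd :: "real \<Rightarrow> bool" where "bnd r \<longleftrightarrow> r = 0 \<or> r = 1"
definition rem :: "nat \<Rightarrow> (nat \<Rightarrow> real) \<Rightarrow> (nat \<Rightarrow> real)" where
  "rem i t = (\<lambda>k. if k < i then t k else t (Suc k))"
definition sh :: "nat \<Rightarrow> nat \<Rightarrow> nat" where "sh i k = (if k < i then k else Suc k)"
definition flr :: "(nat \<Rightarrow> real) \<Rightarrow> (nat \<Rightarrow> real)" where "flr t = (\<lambda>k. if t k = 1 then 1 else 0)"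

primrec nf :: "(nat \<Rightarrow> nat \<Rightarrow> bool \<Rightarrow> 'a \<Rightarrow> 'a) \<Rightarrow> nat \<Rightarrow> 'a \<Rightarrow> (nat \<Rightarrow> real) \<Rightarrow> nat \<times> 'a \<times> (nat \<Rightarrow> real)" where
  "nf d 0 x t = (0, x, t)"
| "nf d (Suc n) x t = (if \<exists>i\<le>n. bnd (t i)
      then (let i = Max {i. i \<le> n \<and> bnd (t i)} in nf d n (d (Suc n) i (t i = 1) x) (rem i t))
      else (Suc n, x, t))"

lemma rem_coface[simp]: "rem i (coface i e t) = t"
  by (auto simp: rem_def coface_def)

lemma coface_rem: "bnd (t i) \<Longrightarrow> coface i (t i = 1) (rem i t) = t"
  by (auto simp: rem_def coface_def bnd_def fun_eq_iff)

lemma coface_at[simp]: "coface i e t i = (if e then 1 else 0)"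
  by (simp add: coface_def)

lemma rem_cube: "t \<in> cube (Suc n) \<Longrightarrow> i \<le> n \<Longrightarrow> rem i t \<in> cube n"
  by (auto simp: cube_def rem_def)

lemma coface_cube: "t \<in> cube n \<Longrightarrow> i \<le> n \<Longrightarrow> coface i e t \<in> cube (Suc n)"
  by (auto simp: cube_def coface_def)

lemma rem_coface_gt: "i \<le> j \<Longrightarrow> rem (Suc j) (coface i e t) = coface i e (rem j t)"
  by (auto simp: rem_def coface_def fun_eq_iff)

lemma coface_gt: "i < k \<Longrightarrow> coface i e t k = t (k - 1)"
  by (simp add: coface_def)

lemma nf_coface:
  assumes pc: "precubical X d"
  shows "x \<in> X (Suc n) \<Longrightarrow> i \<le> n \<Longrightarrow> t \<in> cube n \<Longrightarrow>
     nf d (Suc n) x (coface i e t) = nf d n (d (Suc n) i e x) t"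
proof (induction n arbitrary: x i e t)
  case 0
  then have i0: "i = 0" by simp
  have "{k. k \<le> 0 \<and> bnd (coface i e t k)} = {0}" using i0 by (auto simp: bnd_def)
  then show ?case using i0 by (simp add: bnd_def)
next
  case (Suc n)
  let ?t' = "coface i e t"
  let ?B' = "{k. k \<le> Suc n \<and> bnd (?t' k)}"
  have iB: "i \<in> ?B'" using Suc.prems by (simp add: bnd_def)
  have finB: "finite ?B'" by simp
  define M where "M = Max ?B'"
  have MB: "M \<in> ?B'" unfolding M_def using Max_in[OF finB] iB by blast
  have iM: "i \<le> M" unfolding M_def using iB finB by simp
  have ex: "\<exists>k\<le>Suc n. bnd (?t' k)" using iB by blast
  have L: "nf d (Suc (Suc n)) x ?t' = nf d (Suc n) (d (Suc (Suc n)) M (?t' M = 1) x) (rem M ?t')"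
    using ex by (simp add: M_def Let_def)
  show ?case
  proof (cases "M = i")
    case True
    then show ?thesis using L by (simp del: nf.simps)
  next
    case False
    then obtain j where Mj: "M = Suc j" and ij: "i \<le> j" using iM
      by (metis le_eq_less_or_eq less_imp_Suc_add add_Suc_right le_add1 Suc_le_lessD less_Suc_eq_le)
    have jn: "j \<le> n" using MB Mj by simp
    have tj: "?t' M = t j" using Mj ij by (simp add: coface_gt)
    have bj: "bnd (t j)" using MB tj by simp
    have Bmax: "k \<le> j" if "k \<le> n" "bnd (t k)" for k
    proof -
      have "?t' (Suc k) = t k" if "i \<le> k" using that by (simp add: coface_gt)
      moreover have "?t' k = t k" if "k < i" using that by (simp add: coface_def)
      ultimately have "Suc k \<in> ?B' \<or> k < i" using \<open>k \<le> n\<close> \<open>bnd (t k)\<close> by (cases "i \<le> k") auto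
      then show ?thesis using Mj ij finB unfolding M_def
        by (metis (no_types, lifting) Max_ge Suc_le_mono le_trans less_imp_le_nat)
    qed
    have Bj: "Max {k. k \<le> n \<and> bnd (t k)} = j"
      using bj jn Bmax by (intro Max_eqI) auto
    have x': "d (Suc (Suc n)) (Suc j) (t j = 1) x \<in> X (Suc n)"
      using pc Suc.prems(1) jn unfolding precubical_def by auto
    have remc: "rem j t \<in> cube n" using Suc.prems(3) jn rem_cube by blast
    have "nf d (Suc (Suc n)) x ?t' = nf d (Suc n) (d (Suc (Suc n)) (Suc j) (t j = 1) x) (coface i e (rem j t))"
      using L Mj tj ij by (simp add: rem_coface_gt del: nf.simps)
    also have "\<dots> = nf d n (d (Suc n) i e (d (Suc (Suc n)) (Suc j) (t j = 1) x)) (rem j t)"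
      using Suc.IH[OF x' _ remc] ij jn by simp
    also have "d (Suc n) i e (d (Suc (Suc n)) (Suc j) (t j = 1) x) = d (Suc n) j (t j = 1) (d (Suc (Suc n)) i e x)"
      using pc Suc.prems(1) ij jn unfolding precubical_def by (metis diff_Suc_1 le_imp_less_Suc Suc_le_mono)
    also have "nf d n (d (Suc n) j (t j = 1) (d (Suc (Suc n)) i e x)) (rem j t) = nf d (Suc n) (d (Suc (Suc n)) i e x) t"
      using bj jn Bj by (auto simp: Let_def)
    finally show ?thesis .
  qed
qed

definition nf' where "nf' d = (\<lambda>(n, x, t). nf d n x t)"

lemma nf_rgen: assumes "precubical X d" "(a, b) \<in> rgen X d" shows "nf' d a = nf' d b"
proof -
  obtain n i e x t where "a = (n, d (Suc n) i e x, t)" "b = (Suc n, x, coface i e t)"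
     "x \<in> X (Suc n)" "i \<le> n" "t \<in> cube n" using assms(2) unfolding rgen_def by blast
  then show ?thesis using nf_coface[OF assms(1)] by (simp add: nf'_def)
qed

lemma nf_rrel: assumes "precubical X d" "(a, b) \<in> rrel X d" shows "nf' d a = nf' d b"
  using assms(2) unfolding rrel_def
proof (induction rule: rtrancl_induct)
  case (step y z)
  then show ?case using nf_rgen[OF assms(1), of y z] nf_rgen[OF assms(1), of z y] by auto
qed simp

lemma rrel_sym: "(a, b) \<in> rrel X d \<Longrightarrow> (b, a) \<in> rrel X d"
  unfolding rrel_def by (metis converse_Un converse_converse rtrancl_converseI sup_commute)

lemma rrel_trans: "(a, b) \<in> rrel X d \<Longrightarrow> (b, c) \<in> rrel X d \<Longrightarrow> (a, c) \<in> rrel X d"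
  unfolding rrel_def by (meson rtrancl_trans)

lemma chr_eq_rrel: "((n, x, t), (m, y, u)) \<in> rrel X d \<Longrightarrow> chr X d n x t = chr X d m y u"
  unfolding chr_def using rrel_sym rrel_trans by blast

lemma chr_eq_iff: "chr X d n x t = chr X d m y u \<longleftrightarrow> ((n, x, t), (m, y, u)) \<in> rrel X d"
proof
  assume "chr X d n x t = chr X d m y u"
  moreover have "(m, y, u) \<in> chr X d m y u" unfolding chr_def rrel_def by simp
  ultimately show "((n, x, t), (m, y, u)) \<in> rrel X d" unfolding chr_def by (metis Image_singleton_iff)
qed (rule chr_eq_rrel)

lemma chr_face: "x \<in> X (Suc n) \<Longrightarrow> i \<le> n \<Longrightarrow> s \<in> cube n \<Longrightarrow>
   chr X d n (d (Suc n) i e x) s = chr X d (Suc n) x (coface i e s)"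
  by (rule chr_eq_rrel) (auto simp: rrel_def rgen_def)

lemma nf_chr_eq: assumes "precubical X d" "chr X d n x t = chr X d m y u"
  shows "nf d n x t = nf d m y u"
  using nf_rrel[OF assms(1)] assms(2) unfolding chr_eq_iff nf'_def by fastforce

lemma ocube_cube: "u \<in> ocube m \<Longrightarrow> u \<in> cube m"
  by (auto simp: ocube_def cube_def less_imp_le)

lemma nf_fix: assumes "u \<in> ocube m" shows "nf d m y u = (m, y, u)"
proof (cases m)
  case (Suc k)
  have "0 < u i \<and> u i < 1" if "i \<le> k" for i using assms Suc that unfolding ocube_def by auto
  then have nb: "\<not>(\<exists>i\<le>k. bnd (u i))" unfolding bnd_def by fastforce
  show ?thesis unfolding Suc nf.simps if_not_P[OF nb] by (rule refl)
qed simp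



definition intset :: "nat \<Rightarrow> (nat \<Rightarrow> real) \<Rightarrow> nat set" where
  "intset n t = {k. k < n \<and> \<not> bnd (t k)}"

lemma rem_sh: "rem i t k = t (sh i k)"
  by (simp add: rem_def sh_def)

lemma inj_sh: "inj (sh i)"
  by (auto simp: inj_def sh_def split: if_splits)

lemma intset_rem: assumes "bnd (t i)" "i \<le> n"
  shows "intset (Suc n) t = sh i ` intset n (rem i t)"
proof
  show "intset (Suc n) t \<subseteq> sh i ` intset n (rem i t)"
  proof
    fix k assume k: "k \<in> intset (Suc n) t"
    then have ki: "k \<noteq> i" using assms by (auto simp: intset_def)
    show "k \<in> sh i ` intset n (rem i t)"
    proof (cases "k < i")
      case True
      then show ?thesis using k assms by (intro image_eqI[of _ _ k]) (auto simp: intset_def sh_def rem_def)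
    next
      case False
      then show ?thesis using k ki assms by (intro image_eqI[of _ _ "k - 1"]) (auto simp: intset_def sh_def rem_def)
    qed
  qed
next
  show "sh i ` intset n (rem i t) \<subseteq> intset (Suc n) t"
    by (auto simp: intset_def sh_def rem_def)
qed

lemma card_intset_rem: "bnd (t i) \<Longrightarrow> i \<le> n \<Longrightarrow> card (intset (Suc n) t) = card (intset n (rem i t))"
  by (simp add: intset_rem card_image inj_on_subset[OF inj_sh])

lemma sum_intset_rem: "bnd (t i) \<Longrightarrow> i \<le> n \<Longrightarrow> sum t (intset (Suc n) t) = sum (rem i t) (intset n (rem i t))"
  by (simp add: intset_rem sum.reindex inj_on_subset[OF inj_sh] comp_def rem_sh)

lemma intset_ocube: "u \<in> ocube m \<Longrightarrow> intset m u = {..<m}"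
  by (auto simp: intset_def ocube_def bnd_def)

lemma flr_rem: "rem i (flr t) = flr (rem i t)"
  by (simp add: rem_def flr_def fun_eq_iff)

lemma flr_eq1: "(flr t i = 1) = (t i = 1)"
  by (simp add: flr_def)

lemma flr_cube: "t \<in> cube n \<Longrightarrow> flr t \<in> cube n"
  by (auto simp: cube_def flr_def)

lemma nf_props:
  assumes pc: "precubical X d"
  shows "x \<in> X n \<Longrightarrow> t \<in> cube n \<Longrightarrow> nf d n x t = (m, y, u) \<Longrightarrow>
    y \<in> X m \<and> u \<in> ocube m \<and> chr X d n x t = chr X d m y u \<and> chr X d n x (flr t) = chr X d m y (\<lambda>_. 0)
    \<and> card (intset n t) = card (intset m u) \<and> sum t (intset n t) = sum u (intset m u)"
proof (induction n arbitrary: x t)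
  case 0
  then have "t = (\<lambda>_. 0)" by (auto simp: cube_def)
  moreover have "flr (\<lambda>_. 0) = (\<lambda>_. 0)" by (simp add: flr_def)
  ultimately show ?case using 0 by (auto simp: ocube_def)
next
  case (Suc n)
  show ?case
  proof (cases "\<exists>i\<le>n. bnd (t i)")
    case True
    define i where "i = Max {i. i \<le> n \<and> bnd (t i)}"
    have iB: "i \<le> n \<and> bnd (t i)" unfolding i_def
      using Max_in[of "{i. i \<le> n \<and> bnd (t i)}"] True by auto
    define e where "e = (t i = 1)"
    have x': "d (Suc n) i e x \<in> X n" using pc Suc.prems iB unfolding precubical_def by blast
    have t': "rem i t \<in> cube n" using rem_cube Suc.prems iB by blast
    have nfe: "nf d n (d (Suc n) i e x) (rem i t) = (m, y, u)"
      using Suc.prems True by (simp add: i_def e_def Let_def)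
    note IH = Suc.IH[OF x' t' nfe]
    have c1: "chr X d (Suc n) x t = chr X d n (d (Suc n) i e x) (rem i t)"
      using chr_face[of x X n i "rem i t" d e] Suc.prems(1) t' iB coface_rem[of t i] by (simp add: e_def)
    have bf: "bnd (flr t i)" by (simp add: flr_def bnd_def)
    have "coface i e (rem i (flr t)) = flr t"
      using coface_rem[of "flr t" i, OF bf] by (simp add: e_def flr_eq1)
    then have "chr X d n (d (Suc n) i e x) (flr (rem i t)) = chr X d (Suc n) x (flr t)"
      using chr_face[of x X n i "rem i (flr t)" d e] Suc.prems(1) iB flr_cube[OF t']
      by (simp add: flr_rem)
    then have c2: "chr X d (Suc n) x (flr t) = chr X d n (d (Suc n) i e x) (flr (rem i t))" by simp
    show ?thesis using IH c1 c2 card_intset_rem[of t i n] sum_intset_rem[of t i n] iB by simp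
  next
    case False
    have "nf d (Suc n) x t = (Suc n, x, t)" by (simp only: nf.simps if_not_P[OF False])
    then have tu: "(m, y, u) = (Suc n, x, t)" using Suc.prems by simp
    have oc: "t \<in> ocube (Suc n)" using Suc.prems(2) False
      by (auto simp: cube_def ocube_def bnd_def less_Suc_eq_le order_less_le)
    have "t k \<noteq> 1" for k using oc by (cases "k < Suc n") (auto simp: ocube_def)
    then have "flr t = (\<lambda>_. 0)" by (simp add: flr_def)
    then show ?thesis using tu oc Suc.prems by auto
  qed
qed

lemma supp_chr:
  assumes pc: "precubical X d" and x: "x \<in> X n" and t: "t \<in> cube n" and e: "nf d n x t = (m, y, u)"
  shows "supp X d (chr X d n x t) = (m, y)"
proof -
  note P = nf_props[OF pc x t e]
  have Py: "y \<in> X m" and Pu: "u \<in> ocube m" and Pc: "chr X d n x t = chr X d m y u"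
    using P by blast+
  have nfu: "nf d m y u = (m, y, u)" using nf_fix[OF Pu] .
  have uniq: "(n', x') = (m, y)" if a: "x' \<in> X n'" "t' \<in> ocube n'" "chr X d n' x' t' = chr X d n x t" for n' x' t'
  proof -
    have "chr X d n' x' t' = chr X d m y u" using a(3) Pc by simp
    then have "nf d n' x' t' = nf d m y u" by (rule nf_chr_eq[OF pc])
    then have "(n', x', t') = (m, y, u)" using nf_fix[OF a(2), of d x'] nfu by simp
    then show ?thesis by simp
  qed
  show ?thesis unfolding supp_def
  proof (rule the_equality)
    show "case (m, y) of (n', x') \<Rightarrow> x' \<in> X n' \<and> (\<exists>t'\<in>ocube n'. chr X d n' x' t' = chr X d n x t)"
      using Py Pu Pc by auto
  next
    fix z assume "case z of (n', x') \<Rightarrow> x' \<in> X n' \<and> (\<exists>t'\<in>ocube n'. chr X d n' x' t' = chr X d n x t)"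
    then show "z = (m, y)" using uniq by (cases z) blast
  qed
qed

lemma sv_chr:
  assumes pc: "precubical X d" and x: "x \<in> X n" and t: "t \<in> cube n"
  shows "supp_vertex X d (chr X d n x t) = chr X d n x (flr t)"
proof -
  obtain m y u where e: "nf d n x t = (m, y, u)" by (metis prod_cases3)
  show ?thesis using supp_chr[OF pc x t e] nf_props[OF pc x t e] by (simp add: supp_vertex_def)
qed

lemma inv_chr:
  assumes pc: "precubical X d" and x: "x \<in> X n" and t: "t \<in> cube n"
    and x': "x' \<in> X n'" and t': "t' \<in> cube n'" and eq: "chr X d n x t = chr X d n' x' t'"
  shows "card (intset n t) = card (intset n' t') \<and> sum t (intset n t) = sum t' (intset n' t')"
proof -
  obtain m y u where e: "nf d n x t = (m, y, u)" by (metis prod_cases3)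
  have e': "nf d n' x' t' = (m, y, u)" using nf_chr_eq[OF pc eq] e by simp
  show ?thesis using nf_props[OF pc x t e] nf_props[OF pc x' t' e'] by simp
qed

lemma skel_chr:
  assumes pc: "precubical X d" and x: "x \<in> X n" and t: "t \<in> cube n" and c: "card (intset n t) \<le> k"
  shows "chr X d n x t \<in> skeleton X d k"
proof -
  obtain m y u where e: "nf d n x t = (m, y, u)" by (metis prod_cases3)
  note P = nf_props[OF pc x t e]
  have "m \<le> k" using P c intset_ocube[of u m] by simp
  then show ?thesis using P ocube_cube unfolding skeleton_def by blast
qed



abbreviation T01 where "T01 \<equiv> top_of_set {0..1::real}"

lemma rcirc_trans: "rcirc X d V p q \<Longrightarrow> rcirc X d V q r \<Longrightarrow> rcirc X d V p r"
  unfolding rcirc_def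
  apply (elim disjE conjE)
     apply (rule disjI1, simp)
    apply (rule disjI2, simp)
   apply (rule disjI2, simp)
  apply (rule disjI2, erule (1) tranclp_trans)
  done

lemma dip_circ:
  assumes "dipath X d f" "openin (realization_top X d) V" "0 \<le> a" "a \<le> b" "b \<le> 1"
    "\<And>r. a \<le> r \<Longrightarrow> r \<le> b \<Longrightarrow> f r \<in> V"
  shows "rcirc X d V (f a) (f b)"
proof -
  have "circ1 (f -` V \<inter> topspace T01) a b" using assms by (auto simp: circ1_def)
  then show ?thesis using assms(1,2) unfolding dipath_def stream_map_def by blast
qed

lemma dip_cont: "dipath X d f \<Longrightarrow> continuous_map T01 (realization_top X d) f"
  by (simp add: dipath_def stream_map_def)

lemma dipath_I:
  assumes "continuous_map T01 (realization_top X d) f"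
    and "\<And>V a b. openin (realization_top X d) V \<Longrightarrow> 0 \<le> a \<Longrightarrow> a \<le> b \<Longrightarrow> b \<le> 1 \<Longrightarrow>
          (\<And>r. a \<le> r \<Longrightarrow> r \<le> b \<Longrightarrow> f r \<in> V) \<Longrightarrow> rcirc X d V (f a) (f b)"
  shows "dipath X d f"
  unfolding dipath_def stream_map_def
proof (intro conjI allI impI assms(1))
  fix V a b assume V: "openin (realization_top X d) V" and c: "circ1 (f -` V \<inter> topspace T01) a b"
  then have "a \<le> b" "{a..b} \<subseteq> f -` V \<inter> {0..1}" by (auto simp: circ1_def)
  then show "rcirc X d V (f a) (f b)" using V by (intro assms(2)) auto
qed

lemma dipath_const: "p \<in> realization X d \<Longrightarrow> dipath X d (\<lambda>_. p)"
  by (rule dipath_I) (auto simp: topspace_rt rcirc_def)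

lemma cube_upd: "v \<in> cube n \<Longrightarrow> i < n \<Longrightarrow> 0 \<le> r \<Longrightarrow> r \<le> 1 \<Longrightarrow> v(i := r) \<in> cube n"
  by (auto simp: cube_def)

lemma cont_upd: "continuous_on S (\<lambda>r::real. v(i := r))"
proof (rule continuous_on_coordinatewise_then_product)
  fix k show "continuous_on S (\<lambda>r. (v(i := r)) k)"
    by (cases "k = i") auto
qed

lemma dipath_edge:
  assumes x: "x \<in> X n" and v: "v \<in> cube n" and i: "i < n"
  shows "dipath X d (\<lambda>r. chr X d n x (v(i := r)))"
proof (rule dipath_I)
  have "continuous_map T01 (top_of_set (cube n)) (\<lambda>r. v(i := r))"
    using cube_upd[OF v i] cont_upd by (auto simp: continuous_map_in_subtopology)
  then have "continuous_map T01 (realization_top X d) (chr X d n x \<circ> (\<lambda>r. v(i := r)))"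
    by (rule continuous_map_compose[OF _ chr_cont[where X=X and d=d, OF x]])
  then show "continuous_map T01 (realization_top X d) (\<lambda>r. chr X d n x (v(i := r)))"
    by (simp add: comp_def)
next
  fix V a b assume V: "openin (realization_top X d) V" and ab: "0 \<le> a" "a \<le> b" "b \<le> 1"
    and inV: "\<And>r. a \<le> r \<Longrightarrow> r \<le> b \<Longrightarrow> chr X d n x (v(i := r)) \<in> V"
  have "cubecirc n {u \<in> cube n. chr X d n x u \<in> V} (v(i := a)) (v(i := b))"
    unfolding cubecirc_def
  proof (rule tranclp.r_into_trancl, intro conjI)
    show "v(i := a) \<in> cube n" "v(i := b) \<in> cube n" using cube_upd[OF v i] ab by auto
    show "v(i := a) \<le> v(i := b)" using ab by (simp add: le_fun_def)
    show "{c \<in> cube n. v(i := a) \<le> c \<and> c \<le> v(i := b)} \<subseteq> {u \<in> cube n. chr X d n x u \<in> V}"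
    proof clarify
      fix c assume c: "c \<in> cube n" "v(i := a) \<le> c" "c \<le> v(i := b)"
      have "c = v(i := c i)"
      proof
        fix k show "c k = (v(i := c i)) k"
        proof (cases "k = i")
          case False
          have "(v(i := a)) k \<le> c k" "c k \<le> (v(i := b)) k" using c(2,3) unfolding le_fun_def by blast+
          then show ?thesis using False by simp
        qed simp
      qed
      moreover have "a \<le> c i" "c i \<le> b" using c(2,3) unfolding le_fun_def by (auto dest: spec[of _ i])
      ultimately show "chr X d n x c \<in> V" using inV by metis
    qed
  qed
  then show "rcirc X d V (chr X d n x (v(i := a))) (chr X d n x (v(i := b)))"
    unfolding rcirc_def using x by (intro disjI2 tranclp.r_into_trancl) blast
qed

definition join :: "(real \<Rightarrow> 'b) \<Rightarrow> (real \<Rightarrow> 'b) \<Rightarrow> real \<Rightarrow> 'b" where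
  "join f g = (\<lambda>r. if r \<le> 1/2 then f (2 * r) else g (2 * r - 1))"

lemma join_cont:
  assumes f: "continuous_map T01 Y f" and g: "continuous_map T01 Y g" and fg: "f 1 = g 0"
  shows "continuous_map T01 Y (join f g)"
  unfolding join_def
proof (intro continuous_map_cases_le continuous_map_compose[where f="\<lambda>t. 2 * t" and g=f, unfolded comp_def]
    continuous_map_compose[where f="\<lambda>t. 2 * t - 1" and g=g, unfolded comp_def], force, force)
  show "continuous_map (subtopology T01 {x \<in> topspace T01. x \<le> 1/2}) T01 ((*) 2)"
    by (auto simp: continuous_map_in_subtopology continuous_map_from_subtopology)
  have "continuous_map
         (subtopology (top_of_set {0..1}) {x. 0 \<le> x \<and> x \<le> 1 \<and> 1 \<le> x * 2})
         euclideanreal (\<lambda>t. 2 * t - 1)"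
    by (intro continuous_intros) (force intro: continuous_map_from_subtopology)
  then show "continuous_map (subtopology T01 {x \<in> topspace T01. 1/2 \<le> x}) T01 (\<lambda>t. 2 * t - 1)"
    by (force simp: continuous_map_in_subtopology)
  show "f (2 * x) = g (2 * x - 1)" if "x \<in> topspace T01" "x = 1/2" for x
  proof -
    have "2 * x = 1" "2 * x - 1 = 0" using that by auto
    then show ?thesis using fg by simp
  qed
qed (auto simp: f g)

lemma dipath_join:
  assumes f: "dipath X d f" and g: "dipath X d g" and fg: "f 1 = g 0"
  shows "dipath X d (join f g)"
proof (rule dipath_I)
  show "continuous_map T01 (realization_top X d) (join f g)"
    using join_cont dip_cont f g fg by blast
next
  fix V a b assume V: "openin (realization_top X d) V" and ab: "0 \<le> a" "a \<le> b" "b \<le> 1"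
    and inV: "\<And>r. a \<le> r \<Longrightarrow> r \<le> b \<Longrightarrow> join f g r \<in> V"
  have L: "rcirc X d V (join f g a') (join f g b')" if "a \<le> a'" "a' \<le> b'" "b' \<le> b" "b' \<le> 1/2" for a' b'
  proof -
    have "rcirc X d V (f (2 * a')) (f (2 * b'))"
    proof (rule dip_circ[OF f V])
      fix r assume "2 * a' \<le> r" "r \<le> 2 * b'"
      then have "join f g (r / 2) \<in> V" using that by (intro inV) auto
      moreover have "r / 2 \<le> 1/2" using that \<open>r \<le> 2 * b'\<close> by simp
      ultimately have "f (2 * (r / 2)) \<in> V" by (simp add: join_def)
      then show "f r \<in> V" by simp
    qed (use that ab in auto)
    then show ?thesis using that by (simp add: join_def)
  qed
  have R: "rcirc X d V (join f g a') (join f g b')" if "a \<le> a'" "a' \<le> b'" "b' \<le> b" "1/2 \<le> a'" for a' b'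
  proof -
    have j: "join f g r = g (2 * r - 1)" if "1/2 \<le> r" for r
    proof (cases "r = 1/2")
      case True
      show ?thesis unfolding True join_def using fg by simp
    next
      case False
      then show ?thesis using that by (simp add: join_def)
    qed
    have "rcirc X d V (g (2 * a' - 1)) (g (2 * b' - 1))"
    proof (rule dip_circ[OF g V])
      fix r assume "2 * a' - 1 \<le> r" "r \<le> 2 * b' - 1"
      then have "join f g ((r + 1) / 2) \<in> V" using that by (intro inV) auto
      moreover have "1/2 \<le> (r + 1) / 2" using that \<open>2 * a' - 1 \<le> r\<close> by simp
      ultimately have "g (2 * ((r + 1) / 2) - 1) \<in> V" using j by metis
      moreover have "2 * ((r + 1) / 2) - 1 = r" by (simp add: field_simps)
      ultimately show "g r \<in> V" by metis
    qed (use that ab in auto)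
    then show ?thesis using that j by simp
  qed
  show "rcirc X d V (join f g a) (join f g b)"
  proof (cases "b \<le> 1/2")
    case True then show ?thesis using L ab by simp
  next
    case False
    show ?thesis
    proof (cases "1/2 \<le> a")
      case True then show ?thesis using R ab by simp
    next
      case False
      then show ?thesis using L[of a "1/2"] R[of "1/2" b] ab \<open>\<not> b \<le> 1/2\<close> rcirc_trans by force
    qed
  qed
qed

definition nonconst :: "(real \<Rightarrow> 'b) \<Rightarrow> bool" where
  "nonconst f \<longleftrightarrow> (\<exists>s\<in>{0..1}. \<exists>t\<in>{0..1}. f s \<noteq> f t)"

lemma nonconst_join1: assumes "nonconst f" shows "nonconst (join f g)"
proof -
  obtain s t where st: "s \<in> {0..1}" "t \<in> {0..1}" "f s \<noteq> f t" using assms unfolding nonconst_def by blast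
  have "join f g (r / 2) = f r" if "r \<in> {0..1}" for r using that by (auto simp: join_def)
  then show ?thesis unfolding nonconst_def using st
    by (intro bexI[of _ "s / 2"] bexI[of _ "t / 2"]) auto
qed

lemma join_g: assumes "f 1 = g 0" "r \<in> {0..1}" shows "join f g ((r + 1) / 2) = g r"
proof (cases "r = 0")
  case True
  then have "join f g ((r + 1) / 2) = f 1" by (simp add: join_def)
  then show ?thesis using assms True by simp
next
  case False
  have "(2 * r + 2) / 2 - 1 = r" by (simp add: field_simps)
  then show ?thesis using assms False by (simp add: join_def)
qed

lemma nonconst_join2: assumes "nonconst g" "f 1 = g 0" shows "nonconst (join f g)"
proof -
  obtain s t where st: "s \<in> {0..1}" "t \<in> {0..1}" "g s \<noteq> g t" using assms unfolding nonconst_def by blast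
  then show ?thesis unfolding nonconst_def using join_g[where f=f and g=g, OF assms(2)]
    by (intro bexI[of _ "(s + 1) / 2"] bexI[of _ "(t + 1) / 2"]) auto
qed

definition cellular' where "cellular' X d f \<longleftrightarrow> f 0 \<in> skeleton X d 0 \<and> f 1 \<in> skeleton X d 0 \<and> (\<forall>r\<in>{0..1}. f r \<in> skeleton X d 1)"

lemma cellular'_iff: "cellular_path X d f \<longleftrightarrow> cellular' X d f"
  by (auto simp: cellular_path_def cellular'_def)

lemma skel_mono: "j \<le> k \<Longrightarrow> skeleton X d j \<subseteq> skeleton X d k"
  by (force simp: skeleton_def)

lemma cellular_join: "cellular' X d f \<Longrightarrow> cellular' X d g \<Longrightarrow> cellular' X d (join f g)"
  unfolding cellular'_def join_def by auto

lemma cellular_const: "p \<in> skeleton X d 0 \<Longrightarrow> cellular' X d (\<lambda>_. p)"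
  unfolding cellular'_def using skel_mono[of 0 1] by auto



definition vert :: "nat \<Rightarrow> (nat \<Rightarrow> real) \<Rightarrow> bool" where
  "vert n v \<longleftrightarrow> v \<in> cube n \<and> (\<forall>k. v k = 0 \<or> v k = 1)"

lemma intset_vert: "vert n v \<Longrightarrow> intset n v = {}"
  by (auto simp: vert_def intset_def bnd_def)

lemma intset_upd: "vert n v \<Longrightarrow> intset n (v(i := r)) \<subseteq> {i}"
  by (auto simp: vert_def intset_def bnd_def)

lemma card_intset_upd: "vert n v \<Longrightarrow> card (intset n (v(i := r))) \<le> 1"
  using card_mono[OF _ intset_upd[of n v i r]] by simp

lemma flr_vert: "t \<in> cube n \<Longrightarrow> vert n (flr t)"
  using flr_cube by (auto simp: vert_def flr_def)

definition good where
  "good X d \<beta> p q \<longleftrightarrow> dipath X d \<beta> \<and> cellular' X d \<beta> \<and> \<beta> 0 = p \<and> \<beta> 1 = q"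

lemma join_ends[simp]: "join f g 0 = f 0" "join f g 1 = g 1"
  by (auto simp: join_def)

lemma good_join: "good X d f p q \<Longrightarrow> good X d g q r \<Longrightarrow> good X d (join f g) p r"
  unfolding good_def using dipath_join cellular_join by fastforce

lemma vert_skel0: "precubical X d \<Longrightarrow> x \<in> X n \<Longrightarrow> vert n v \<Longrightarrow> chr X d n x v \<in> skeleton X d 0"
  using skel_chr[of X d x n v 0] intset_vert[of n v] by (simp add: vert_def)

lemma cellpath:
  assumes pc: "precubical X d" and x: "x \<in> X n"
  shows "vert n a \<Longrightarrow> vert n b \<Longrightarrow> a \<le> b \<Longrightarrow> card {k. k < n \<and> a k \<noteq> b k} = D \<Longrightarrow>
    \<exists>\<beta>. good X d \<beta> (chr X d n x a) (chr X d n x b) \<and> (a \<noteq> b \<longrightarrow> nonconst \<beta>)"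
proof (induction D arbitrary: a)
  case 0
  have "{k. k < n \<and> a k \<noteq> b k} = {}" using 0 by simp
  then have "a = b" using 0 by (auto simp: vert_def cube_def fun_eq_iff) (metis not_less)
  moreover have ac: "a \<in> cube n" using 0(1) by (simp add: vert_def)
  have "dipath X d (\<lambda>_. chr X d n x a)" by (rule dipath_const[OF chr_in_real[where X=X and d=d, OF x ac]])
  moreover have "cellular' X d (\<lambda>_. chr X d n x a)" by (rule cellular_const[OF vert_skel0[OF pc x 0(1)]])
  ultimately have "good X d (\<lambda>_. chr X d n x a) (chr X d n x a) (chr X d n x a)" by (simp add: good_def)
  then show ?case using \<open>a = b\<close> by blast
next
  case (Suc D)
  then obtain i where i: "i < n" "a i \<noteq> b i" by (metis (mono_tags, lifting) Collect_empty_eq card.empty nat.distinct(1))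
  have ai: "a i = 0" "b i = 1" using i Suc.prems(1-3) unfolding vert_def le_fun_def
    by (metis order_antisym zero_le_one order_refl)+
  define a' where "a' = a(i := 1)"
  have va': "vert n a'" using Suc.prems(1) i by (auto simp: a'_def vert_def cube_def)
  have a'b: "a' \<le> b" using Suc.prems(3) ai by (auto simp: a'_def le_fun_def)
  have "{k. k < n \<and> a k \<noteq> b k} = insert i {k. k < n \<and> a' k \<noteq> b k}" using i ai by (auto simp: a'_def)
  moreover have "i \<notin> {k. k < n \<and> a' k \<noteq> b k}" using ai by (simp add: a'_def)
  moreover have "finite {k. k < n \<and> a' k \<noteq> b k}" by simp
  ultimately have "card {k. k < n \<and> a' k \<noteq> b k} = D" using Suc.prems(4) by (simp only: card_insert_disjoint) simp
  then obtain \<beta>2 where \<beta>2: "good X d \<beta>2 (chr X d n x a') (chr X d n x b)"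
    using Suc.IH[OF va' Suc.prems(2) a'b] by blast
  define \<sigma> where "\<sigma> = (\<lambda>r. chr X d n x (a(i := r)))"
  have a0: "a(i := 0) = a" using ai by auto
  have ac: "a \<in> cube n" using Suc.prems(1) by (simp add: vert_def)
  have gs: "good X d \<sigma> (chr X d n x a) (chr X d n x a')"
    unfolding good_def cellular'_def
  proof (intro conjI ballI)
    show "dipath X d \<sigma>" unfolding \<sigma>_def using dipath_edge[where X=X and d=d, OF x ac i(1)] .
    show "\<sigma> 0 \<in> skeleton X d 0" "\<sigma> 0 = chr X d n x a" using vert_skel0[OF pc x Suc.prems(1)] a0 by (auto simp: \<sigma>_def)
    show "\<sigma> 1 \<in> skeleton X d 0" "\<sigma> 1 = chr X d n x a'" using vert_skel0[OF pc x va'] by (auto simp: \<sigma>_def a'_def)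
    fix r :: real assume "r \<in> {0..1}"
    then show "\<sigma> r \<in> skeleton X d 1" unfolding \<sigma>_def
      using skel_chr[OF pc x cube_upd[OF ac i(1)]] card_intset_upd[OF Suc.prems(1)] by auto
  qed
  have nc: "nonconst \<sigma>"
  proof -
    have "intset n (a(i := 1/2)) = {i}" using i intset_upd[OF Suc.prems(1), of i "1/2"] by (auto simp: intset_def bnd_def)
    then have "card (intset n (a(i := 1/2))) \<noteq> card (intset n (a(i := 0)))"
      using a0 intset_vert[OF Suc.prems(1)] by simp
    then have "\<sigma> (1/2) \<noteq> \<sigma> 0" unfolding \<sigma>_def
      using inv_chr[OF pc x cube_upd[OF ac i(1)] x cube_upd[OF ac i(1)], of "1/2" 0] by auto
    then show ?thesis unfolding nonconst_def by (intro bexI[of _ "1/2"] bexI[of _ 0]) auto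
  qed
  show ?case using good_join[OF gs \<beta>2] nonconst_join1[OF nc] by blast
qed

definition pot where
  "pot X d p = (SOME c. \<exists>n x t. x \<in> X n \<and> t \<in> cube n \<and> p = chr X d n x t \<and> c = (card (intset n t), sum t (intset n t)))"

lemma pot_chr: assumes pc: "precubical X d" and x: "x \<in> X n" and t: "t \<in> cube n"
  shows "pot X d (chr X d n x t) = (card (intset n t), sum t (intset n t))"
proof -
  let ?P = "\<lambda>c. \<exists>n' x' t'. x' \<in> X n' \<and> t' \<in> cube n' \<and> chr X d n x t = chr X d n' x' t' \<and> c = (card (intset n' t'), sum t' (intset n' t'))"
  have "?P (card (intset n t), sum t (intset n t))" using x t by blast
  then have "?P (pot X d (chr X d n x t))" unfolding pot_def by (rule someI)
  then show ?thesis using inv_chr[OF pc x t] by force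
qed

definition lexle :: "nat \<times> real \<Rightarrow> nat \<times> real \<Rightarrow> bool" where
  "lexle a b \<longleftrightarrow> fst a < fst b \<or> (fst a = fst b \<and> snd a \<le> snd b)"

definition weak where "weak X d p q \<longleftrightarrow> lexle (pot X d p) (pot X d q) \<and> (pot X d p = pot X d q \<longrightarrow> p = q)"

lemma weak_refl: "weak X d p p" unfolding weak_def lexle_def by blast

lemma lexle_trans: assumes "lexle a b" "lexle b c" shows "lexle a c"
proof -
  have "fst a \<le> fst b" "fst b \<le> fst c" using assms unfolding lexle_def by auto
  show ?thesis
  proof (cases "fst a < fst c")
    case True then show ?thesis by (simp add: lexle_def)
  next
    case False
    then have "fst a = fst b" "fst b = fst c" using \<open>fst a \<le> fst b\<close> \<open>fst b \<le> fst c\<close> by auto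
    then have "snd a \<le> snd b" "snd b \<le> snd c" using assms unfolding lexle_def by auto
    then show ?thesis using \<open>fst a = fst b\<close> \<open>fst b = fst c\<close> unfolding lexle_def by auto
  qed
qed

lemma lexle_antisym: assumes "lexle a b" "lexle b a" shows "a = b"
proof -
  have "fst a = fst b" using assms unfolding lexle_def by auto
  then have "snd a = snd b" using assms unfolding lexle_def by auto
  then show ?thesis using \<open>fst a = fst b\<close> by (simp add: prod_eq_iff)
qed

lemma weak_trans: assumes "weak X d p q" "weak X d q r" shows "weak X d p r"
proof -
  have l1: "lexle (pot X d p) (pot X d q)" and i1: "pot X d p = pot X d q \<Longrightarrow> p = q"
    using assms(1) unfolding weak_def by blast+
  have l2: "lexle (pot X d q) (pot X d r)" and i2: "pot X d q = pot X d r \<Longrightarrow> q = r"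
    using assms(2) unfolding weak_def by blast+
  have "p = r" if e: "pot X d p = pot X d r"
  proof -
    have "lexle (pot X d q) (pot X d p)" using l2 e by (simp only:)
    then have pq: "pot X d p = pot X d q" using l1 lexle_antisym by blast
    then have qr: "pot X d q = pot X d r" using e by (simp only:)
    show ?thesis using i1[OF pq] i2[OF qr] by (simp only:)
  qed
  then show ?thesis using lexle_trans[OF l1 l2] unfolding weak_def by blast
qed

lemma weak_antisym: assumes "weak X d p q" "weak X d q p" shows "p = q"
proof -
  have "lexle (pot X d p) (pot X d q)" "lexle (pot X d q) (pot X d p)" and i: "pot X d p = pot X d q \<Longrightarrow> p = q"
    using assms unfolding weak_def by blast+
  then show ?thesis using lexle_antisym by blast
qed

lemma step_weak:
  assumes pc: "precubical X d" and x: "x \<in> X n" and s: "s \<in> cube n" and t: "t \<in> cube n"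
    and st: "s \<le> t" and fl: "flr s = flr t"
  shows "weak X d (chr X d n x s) (chr X d n x t)"
proof -
  have f1: "s k = 1 \<longleftrightarrow> t k = 1" for k
  proof -
    have "flr s k = flr t k" using fl by simp
    then show ?thesis unfolding flr_def by (auto split: if_splits)
  qed
  have stk: "s k \<le> t k" for k using st by (simp add: le_fun_def)
  have sub: "intset n s \<subseteq> intset n t"
  proof
    fix k assume "k \<in> intset n s"
    then have k: "k < n" "s k \<noteq> 0" "s k \<noteq> 1" by (auto simp: intset_def bnd_def)
    have "0 \<le> s k" using s k(1) by (auto simp: cube_def)
    then have "0 < s k" using k(2) by simp
    then have "t k \<noteq> 0" using stk[of k] by simp
    moreover have "t k \<noteq> 1" using f1[of k] k(3) by simp
    ultimately show "k \<in> intset n t" using k(1) by (simp add: intset_def bnd_def)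
  qed
  have fin: "finite (intset n t)" by (simp add: intset_def)
  show ?thesis unfolding weak_def lexle_def pot_chr[OF pc x s] pot_chr[OF pc x t] fst_conv snd_conv
  proof (intro conjI impI)
    show "card (intset n s) < card (intset n t) \<or> card (intset n s) = card (intset n t) \<and> sum s (intset n s) \<le> sum t (intset n t)"
    proof (cases "card (intset n s) = card (intset n t)")
      case True
      then have "intset n s = intset n t" using sub fin by (simp add: card_subset_eq)
      then show ?thesis using True stk by (auto intro: sum_mono)
    next
      case False
      then show ?thesis using card_mono[OF fin sub] by simp
    qed
  next
    assume eq: "(card (intset n s), sum s (intset n s)) = (card (intset n t), sum t (intset n t))"
    then have I: "intset n s = intset n t" using sub fin by (simp add: card_subset_eq)
    have "s = t"
    proof
      fix k
      show "s k = t k"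
      proof (cases "k \<in> intset n t")
        case True
        then show ?thesis using sum_mono_inv[of s "intset n t" t k] eq I stk fin by simp
      next
        case False
        show ?thesis
        proof (cases "k < n")
          case True
          then have "bnd (t k)" "bnd (s k)" using False I by (auto simp: intset_def)
          then show ?thesis using f1[of k] unfolding bnd_def by auto
        next
          case False
          then show ?thesis using s t by (auto simp: cube_def)
        qed
      qed
    qed
    then show "chr X d n x s = chr X d n x t" by simp
  qed
qed

lemma flr_mono: assumes s: "s \<in> cube n" and t: "t \<in> cube n" and st: "s \<le> t" shows "flr s \<le> flr t"
  unfolding le_fun_def
proof
  fix k show "flr s k \<le> flr t k"
  proof (cases "s k = 1")
    case True
    have "k < n" using True s by (rule_tac ccontr) (auto simp: cube_def)
    then have "t k \<le> 1" using t by (auto simp: cube_def)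
    moreover have "s k \<le> t k" using st by (simp add: le_fun_def)
    ultimately have "t k = 1" using True by simp
    then show ?thesis by (simp add: flr_def)
  next
    case False
    then show ?thesis by (simp add: flr_def)
  qed
qed

lemma step_path:
  assumes pc: "precubical X d" and x: "x \<in> X n" and s: "s \<in> cube n" and t: "t \<in> cube n" and st: "s \<le> t"
  shows "\<exists>\<beta>. good X d \<beta> (supp_vertex X d (chr X d n x s)) (supp_vertex X d (chr X d n x t)) \<and>
    (nonconst \<beta> \<or> weak X d (chr X d n x s) (chr X d n x t))"
proof -
  obtain \<beta> where "good X d \<beta> (chr X d n x (flr s)) (chr X d n x (flr t))" "flr s \<noteq> flr t \<longrightarrow> nonconst \<beta>"
    using cellpath[OF pc x flr_vert[OF s] flr_vert[OF t] flr_mono[OF s t st] refl] by blast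
  then show ?thesis using sv_chr[OF pc x s] sv_chr[OF pc x t] step_weak[OF pc x s t st] by metis
qed

lemma cubecirc_le: "cubecirc n W s t \<Longrightarrow> s \<in> cube n \<and> t \<in> cube n \<and> s \<le> t"
  unfolding cubecirc_def by (induction rule: tranclp_induct) (auto intro: order_trans)

lemma chain_path:
  assumes pc: "precubical X d"
  shows "(\<lambda>p q. \<exists>n x s t. x \<in> X n \<and> cubecirc n {u \<in> cube n. chr X d n x u \<in> V} s t \<and>
                 p = chr X d n x s \<and> q = chr X d n x t)\<^sup>+\<^sup>+ p q \<Longrightarrow>
    \<exists>\<beta>. good X d \<beta> (supp_vertex X d p) (supp_vertex X d q) \<and> (nonconst \<beta> \<or> weak X d p q)"
proof (induction rule: tranclp_induct)
  case (base q)
  then show ?case using step_path[OF pc] cubecirc_le by blast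
next
  case (step q r)
  obtain \<beta>1 where b1: "good X d \<beta>1 (supp_vertex X d p) (supp_vertex X d q)" "nonconst \<beta>1 \<or> weak X d p q"
    using step.IH by blast
  obtain \<beta>2 where b2: "good X d \<beta>2 (supp_vertex X d q) (supp_vertex X d r)" "nonconst \<beta>2 \<or> weak X d q r"
    using step.hyps(2) step_path[OF pc] cubecirc_le by blast
  have "\<beta>1 1 = \<beta>2 0" using b1 b2 by (simp add: good_def)
  then show ?case using good_join[OF b1(1) b2(1)] nonconst_join1 nonconst_join2 weak_trans b1(2) b2(2) by metis
qed

lemma real_rep: "p \<in> realization X d \<Longrightarrow> \<exists>n x t. x \<in> X n \<and> t \<in> cube n \<and> p = chr X d n x t"
  unfolding realization_def by blast

lemma sv_props: assumes pc: "precubical X d" and p: "p \<in> realization X d"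
  shows "supp_vertex X d p \<in> skeleton X d 0 \<and> supp_vertex X d p \<in> realization X d"
proof -
  obtain n x t where r: "x \<in> X n" "t \<in> cube n" "p = chr X d n x t" using real_rep[OF p] by blast
  show ?thesis using sv_chr[OF pc r(1,2)] r vert_skel0[OF pc r(1) flr_vert[OF r(2)]] chr_in_real[where X=X and d=d, OF r(1) flr_cube[OF r(2)]]
    by simp
qed

lemma rcirc_path:
  assumes pc: "precubical X d" and p: "p \<in> realization X d" and rc: "rcirc X d V p q"
  shows "\<exists>\<beta>. good X d \<beta> (supp_vertex X d p) (supp_vertex X d q) \<and> (nonconst \<beta> \<or> weak X d p q)"
proof (cases "p = q")
  case True
  have "good X d (\<lambda>_. supp_vertex X d p) (supp_vertex X d p) (supp_vertex X d q)"
    using True sv_props[OF pc p] dipath_const cellular_const by (auto simp: good_def)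
  then show ?thesis using weak_refl True by blast
next
  case False
  then show ?thesis using rc chain_path[OF pc] unfolding rcirc_def by blast
qed



lemma hom_paths:
  assumes f: "continuous_map T01 Y f" and g: "continuous_map T01 Y g"
    and pcg: "path_component_of Y (f 0) (g 0)"
  shows "homotopic_with (\<lambda>_. True) T01 Y f g"
proof -
  have ct: "contractible_space T01" by (simp add: convex_imp_contractible)
  obtain cf where hf: "homotopic_with (\<lambda>h. True) T01 Y f (\<lambda>x. cf)"
    using nullhomotopic_from_contractible_space[OF f ct] by blast
  obtain cg where hg: "homotopic_with (\<lambda>h. True) T01 Y g (\<lambda>x. cg)"
    using nullhomotopic_from_contractible_space[OF g ct] by blast
  have c0: "continuous_map T01 T01 (\<lambda>_. 0::real)" by simp
  have "topspace T01 \<noteq> {}" by simp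
  then have ntriv: "T01 \<noteq> trivial_topology" unfolding null_topspace_iff_trivial .
  have "homotopic_with (\<lambda>h. True) T01 Y (f \<circ> (\<lambda>_. 0)) ((\<lambda>x. cf) \<circ> (\<lambda>_. 0::real))"
    by (rule homotopic_with_compose_continuous_map_right[OF hf c0]) simp
  then have "homotopic_with (\<lambda>x. True) T01 Y (\<lambda>x. f 0) (\<lambda>x. cf)" by (simp add: comp_def)
  then have pf: "path_component_of Y (f 0) cf" using ntriv unfolding homotopic_constant_maps by blast
  have "homotopic_with (\<lambda>h. True) T01 Y (g \<circ> (\<lambda>_. 0)) ((\<lambda>x. cg) \<circ> (\<lambda>_. 0::real))"
    by (rule homotopic_with_compose_continuous_map_right[OF hg c0]) simp
  then have "homotopic_with (\<lambda>x. True) T01 Y (\<lambda>x. g 0) (\<lambda>x. cg)" by (simp add: comp_def)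
  then have pg: "path_component_of Y (g 0) cg" using ntriv unfolding homotopic_constant_maps by blast
  have "path_component_of Y cf (f 0)" using pf by (rule path_component_of_sym)
  then have "path_component_of Y cf (g 0)" using pcg by (rule path_component_of_trans)
  then have "path_component_of Y cf cg" using pg by (rule path_component_of_trans)
  then have "homotopic_with (\<lambda>h. True) T01 Y (\<lambda>x. cf) (\<lambda>x. cg)" unfolding homotopic_constant_maps by (rule disjI2)
  then have "homotopic_with (\<lambda>h. True) T01 Y f (\<lambda>x. cg)" by (rule homotopic_with_trans[OF hf])
  then show ?thesis using homotopic_with_symD[OF hg] by (rule homotopic_with_trans)
qed

lemma sv_pathcomp:
  assumes pc: "precubical X d" and p: "p \<in> realization X d"
  shows "path_component_of (realization_top X d) p (supp_vertex X d p)"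
proof -
  obtain n x t where r: "x \<in> X n" "t \<in> cube n" "p = chr X d n x t" using real_rep[OF p] by blast
  define h where "h = (\<lambda>r::real. \<lambda>k. t k + r * (flr t k - t k))"
  have hc: "continuous_on {0..1} h" unfolding h_def by (intro continuous_intros)
  have hin: "h r \<in> cube n" if "r \<in> {0..1}" for r
  proof -
    have "0 \<le> t k + r * (flr t k - t k) \<and> t k + r * (flr t k - t k) \<le> 1" if "k < n" for k
    proof -
      have tk: "0 \<le> t k" "t k \<le> 1" using r(2) \<open>k < n\<close> by (auto simp: cube_def)
      have fk: "0 \<le> flr t k" "flr t k \<le> 1" by (auto simp: flr_def)
      have "t k + r * (flr t k - t k) = (1 - r) * t k + r * flr t k" by (simp add: algebra_simps)
      moreover have "0 \<le> (1 - r) * t k + r * flr t k" using tk fk that \<open>r \<in> {0..1}\<close> by simp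
      moreover have "(1 - r) * t k + r * flr t k \<le> (1 - r) * 1 + r * 1"
        using tk fk \<open>r \<in> {0..1}\<close> by (intro add_mono mult_left_mono) auto
      ultimately show ?thesis by simp
    qed
    moreover have "t k + r * (flr t k - t k) = 0" if "n \<le> k" for k
      using r(2) that by (auto simp: cube_def flr_def)
    ultimately show ?thesis by (auto simp: cube_def h_def)
  qed
  have "continuous_map T01 (top_of_set (cube n)) h"
    using hc hin by (auto simp: continuous_map_in_subtopology)
  then have "pathin (realization_top X d) (chr X d n x \<circ> h)"
    unfolding pathin_def using continuous_map_compose chr_cont[where X=X and d=d, OF r(1)] by blast
  moreover have "h 0 = t" "h 1 = flr t" by (auto simp: h_def)
  ultimately show ?thesis unfolding path_component_of_def
    using sv_chr[OF pc r(1,2)] r(3) by (intro exI[of _ "chr X d n x \<circ> h"]) auto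
qed

theorem mainTheorem6:
  fixes X :: "nat \<Rightarrow> 'a set" and d :: "nat \<Rightarrow> nat \<Rightarrow> bool \<Rightarrow> 'a \<Rightarrow> 'a"
    and \<alpha> :: "real \<Rightarrow> 'a rpoint"
  assumes "precubical X d"
    and "dipath X d \<alpha>"
  shows "\<exists>\<beta>. dipath X d \<beta> \<and>
           \<beta> 0 = supp_vertex X d (\<alpha> 0) \<and> \<beta> 1 = supp_vertex X d (\<alpha> 1) \<and>
           cellular_path X d \<beta> \<and>
           homotopic_with (\<lambda>_. True) (top_of_set {0..1}) (realization_top X d) \<alpha> \<beta> \<and>
           ((\<exists>s\<in>{0..1}. \<exists>t\<in>{0..1}. \<alpha> s \<noteq> \<alpha> t) \<and> \<alpha> 0 = \<alpha> 1
              \<longrightarrow> (\<exists>s\<in>{0..1}. \<exists>t\<in>{0..1}. \<beta> s \<noteq> \<beta> t))"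
proof -
  note pc = assms(1)
  have ca: "continuous_map T01 (realization_top X d) \<alpha>" using dip_cont[OF assms(2)] .
  have inR: "\<alpha> r \<in> realization X d" if "r \<in> {0..1}" for r
    using continuous_map_image_subset_topspace[OF ca] that topspace_rt by fastforce
  have opR: "openin (realization_top X d) (realization X d)"
    using openin_topspace[of "realization_top X d"] topspace_rt by metis
  have rc: "rcirc X d (realization X d) (\<alpha> a) (\<alpha> b)" if "0 \<le> a" "a \<le> b" "b \<le> 1" for a b
    using dip_circ[OF assms(2) opR that] inR that by auto
  have hom: "homotopic_with (\<lambda>_. True) T01 (realization_top X d) \<alpha> \<beta>"
    if "good X d \<beta> (supp_vertex X d (\<alpha> 0)) q" for \<beta> q
  proof (rule hom_paths[OF ca])
    show "continuous_map T01 (realization_top X d) \<beta>" using that dip_cont by (auto simp: good_def)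
    show "path_component_of (realization_top X d) (\<alpha> 0) (\<beta> 0)"
      using that sv_pathcomp[OF pc inR[of 0]] by (auto simp: good_def)
  qed
  show ?thesis
  proof (cases "nonconst \<alpha> \<and> \<alpha> 0 = \<alpha> 1")
    case False
    obtain \<beta> where b: "good X d \<beta> (supp_vertex X d (\<alpha> 0)) (supp_vertex X d (\<alpha> 1))"
      using rcirc_path[OF pc inR rc[of 0 1]] by auto
    then show ?thesis using hom[OF b] False unfolding good_def cellular'_iff nonconst_def by blast
  next
    case True
    then obtain s where s: "s \<in> {0..1}" "\<alpha> s \<noteq> \<alpha> 0" unfolding nonconst_def by metis
    obtain \<beta>1 where b1: "good X d \<beta>1 (supp_vertex X d (\<alpha> 0)) (supp_vertex X d (\<alpha> s))"
        "nonconst \<beta>1 \<or> weak X d (\<alpha> 0) (\<alpha> s)"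
      using rcirc_path[OF pc inR rc[of 0 s]] s by auto
    obtain \<beta>2 where b2: "good X d \<beta>2 (supp_vertex X d (\<alpha> s)) (supp_vertex X d (\<alpha> 1))"
        "nonconst \<beta>2 \<or> weak X d (\<alpha> s) (\<alpha> 1)"
      using rcirc_path[OF pc inR rc[of s 1]] s by auto
    have e: "\<beta>1 1 = \<beta>2 0" using b1 b2 by (simp add: good_def)
    have gj: "good X d (join \<beta>1 \<beta>2) (supp_vertex X d (\<alpha> 0)) (supp_vertex X d (\<alpha> 1))"
      using good_join[OF b1(1) b2(1)] .
    have "nonconst (join \<beta>1 \<beta>2)"
      using b1(2) b2(2) nonconst_join1 nonconst_join2[where f="\<beta>1" and g="\<beta>2", OF _ e] weak_antisym True s(2) by metis
    then show ?thesis using hom[OF gj] gj unfolding good_def cellular'_iff nonconst_def by blast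
  qed
qed


end
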